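(* Let $\mathbb{F}$ be an algebraically closed field with $\mathrm{char}\,\mathbb{F}=2$, and let $\mathcal{A}$ be a (not necessarily unital) subalgebra of $\mathbf{O}$ with $\mathcal{A}\subseteq\mathbf{O}_0$ and $\dim\mathcal{A}\ge2$. Then there exists $g\in{\rm G}_2$ such that either (a) $\{1_{\mathbf{O}},\mathbf{u}_1\}\subseteq g\mathcal{A}$; or (b) $\{\mathbf{u}_1,\mathbf{v}_2\}\subseteq g\mathcal{A}$ and $1_{\mathbf{O}}\notin g\mathcal{A}$.
   Context: The split octonion algebra $\mathbf{O}$ is the 8-dimensional $\mathbb{F}$-vector space of formal matrices $a=\begin{pmatrix}\alpha&\mathbf{u}\\ \mathbf{v}&\beta\end{pmatrix}$ with $\alpha,\beta\in\mathbb{F}$, $\mathbf{u},\mathbf{v}\in\mathbb{F}^3$, with multiplication $\begin{pmatrix}\alpha&\mathbf{u}\\ \mathbf{v}&\beta\end{pmatrix}\begin{pmatrix}\alpha'&\mathbf{u}'\\ \mathbf{v}'&\beta'\end{pmatrix}=\begin{pmatrix}\alpha\alpha'+\mathbf{u}\cdot\mathbf{v}'&\alpha\mathbf{u}'+\beta'\mathbf{u}-\mathbf{v}\times\mathbf{v}'\\ \alpha'\mathbf{v}+\beta\mathbf{v}'+\mathbf{u}\times\mathbf{u}'&\beta\beta'+\mathbf{v}\cdot\mathbf{u}'\end{pmatrix}$ (dot product and cross product on $\mathbb{F}^3$). Trace $\mathrm{tr}(a)=\alpha+\beta$, $\mathbf{O}_0=\{a\in\mathbf{O}\mid\mathrm{tr}(a)=0\}$.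 With $\mathbf{c}_1,\mathbf{c}_2,\mathbf{c}_3$ the standard basis of $\mathbb{F}^3$: $\mathbf{u}_i$ has $\mathbf{u}=\mathbf{c}_i$ and all else $0$, $\mathbf{v}_i$ has $\mathbf{v}=\mathbf{c}_i$ and all else $0$, and $1_{\mathbf{O}}$ has $\alpha=\beta=1$, $\mathbf{u}=\mathbf{v}=0$. ${\rm G}_2=\mathrm{Aut}(\mathbf{O})$. *)

theory Defs
  imports "HOL-Computational_Algebra.Polynomial"
begin

datatype 'a vec3 = V3 'a 'a 'a

fun v3add :: "'a::field vec3 \<Rightarrow> 'a vec3 \<Rightarrow> 'a vec3" where
  "v3add (V3 a b c) (V3 x y z) = V3 (a + x) (b + y) (c + z)"

fun v3scale :: "'a::field \<Rightarrow> 'a vec3 \<Rightarrow> 'a vec3" where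
  "v3scale s (V3 x y z) = V3 (s * x) (s * y) (s * z)"

fun v3neg :: "'a::field vec3 \<Rightarrow> 'a vec3" where
  "v3neg (V3 x y z) = V3 (- x) (- y) (- z)"

fun dot3 :: "'a::field vec3 \<Rightarrow> 'a vec3 \<Rightarrow> 'a" where
  "dot3 (V3 a b c) (V3 x y z) = a * x + b * y + c * z"

fun cross3 :: "'a::field vec3 \<Rightarrow> 'a vec3 \<Rightarrow> 'a vec3" where
  "cross3 (V3 a b c) (V3 x y z) = V3 (b * z - c * y) (c * x - a * z) (a * y - b * x)"

definition zero3 :: "'a::field vec3" where "zero3 = V3 0 0 0"

text \<open>Split octonions: formal matrices (alpha, u; v, beta).\<close>
datatype 'a oct = Oct (oalpha: 'a) (ou: "'a vec3") (ov: "'a vec3") (obeta: 'a)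

fun oadd :: "'a::field oct \<Rightarrow> 'a oct \<Rightarrow> 'a oct" where
  "oadd (Oct a u v b) (Oct a' u' v' b') = Oct (a + a') (v3add u u') (v3add v v') (b + b')"

fun oscale :: "'a::field \<Rightarrow> 'a oct \<Rightarrow> 'a oct" where
  "oscale s (Oct a u v b) = Oct (s * a) (v3scale s u) (v3scale s v) (s * b)"

definition ozero :: "'a::field oct" where "ozero = Oct 0 zero3 zero3 0"

fun omult :: "'a::field oct \<Rightarrow> 'a oct \<Rightarrow> 'a oct" where
  "omult (Oct a u v b) (Oct a' u' v' b') =
     Oct (a * a' + dot3 u v')
         (v3add (v3add (v3scale a u') (v3scale b' u)) (v3neg (cross3 v v')))
         (v3add (v3add (v3scale a' v) (v3scale b v')) (cross3 u u'))
         (b * b' + dot3 v u')"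

definition otr :: "'a::field oct \<Rightarrow> 'a" where "otr x = oalpha x + obeta x"

definition O0 :: "'a::field oct set" where "O0 = {x. otr x = 0}"

definition one_O :: "'a::field oct" where "one_O = Oct 1 zero3 zero3 1"

definition oc :: "nat \<Rightarrow> 'a::field vec3" where
  "oc i = (if i = 1 then V3 1 0 0 else if i = 2 then V3 0 1 0 else V3 0 0 1)"

definition uvec :: "nat \<Rightarrow> 'a::field oct" where "uvec i = Oct 0 (oc i) zero3 0"
definition vvec :: "nat \<Rightarrow> 'a::field oct" where "vvec i = Oct 0 zero3 (oc i) 0"

definition subalgebra :: "'a::field oct set \<Rightarrow> bool" where
  "subalgebra A \<longleftrightarrow> ozero \<in> A \<and>
     (\<forall>x\<in>A. \<forall>y\<in>A. oadd x y \<in> A) \<and>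
     (\<forall>s. \<forall>x\<in>A. oscale s x \<in> A) \<and>
     (\<forall>x\<in>A. \<forall>y\<in>A. omult x y \<in> A)"

definition dim_ge2 :: "'a::field oct set \<Rightarrow> bool" where
  "dim_ge2 A \<longleftrightarrow> (\<exists>x\<in>A. \<exists>y\<in>A. \<forall>s t. oadd (oscale s x) (oscale t y) = ozero \<longrightarrow> s = 0 \<and> t = 0)"

definition G2 :: "('a::field oct \<Rightarrow> 'a oct) set" where
  "G2 = {g. bij g \<and> (\<forall>x y. g (oadd x y) = oadd (g x) (g y)) \<and>
            (\<forall>s x. g (oscale s x) = oscale s (g x)) \<and>
            (\<forall>x y. g (omult x y) = omult (g x) (g y))}"

end

theory Submission
  imports Defs
begin

lemma oct_cases: obtains a u1 u2 u3 v1 v2 v3 b where "x = Oct a (V3 u1 u2 u3) (V3 v1 v2 v3) b"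
  by (metis oct.exhaust vec3.exhaust)

definition GG :: "('a::field oct \<Rightarrow> 'a oct) set" where
  "GG = {g. g \<in> G2 \<and> (\<forall>x. otr (g x) = otr x) \<and> g one_O = one_O}"

lemma GG_I:
  assumes "\<And>x y. g (oadd x y) = oadd (g x) (g y)"
    and "\<And>s x. g (oscale s x) = oscale s (g x)"
    and "\<And>x y. g (omult x y) = omult (g x) (g y)"
    and "\<And>x. otr (g x) = otr x" and "g one_O = one_O"
    and "\<And>x. h (g x) = x" and "\<And>x. g (h x) = x"
  shows "g \<in> GG"
proof -
  have "bij g" using assms(6,7) by (metis bijI' )
  then show ?thesis using assms unfolding GG_def G2_def by auto
qed

lemma GG_comp: "g \<in> GG \<Longrightarrow> f \<in> GG \<Longrightarrow> f \<circ> g \<in> GG"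
  unfolding GG_def G2_def by (auto intro: bij_comp)

fun Tm :: "'a::field vec3 \<Rightarrow> 'a oct \<Rightarrow> 'a oct" where
  "Tm a (Oct al u v be) = Oct (al - dot3 a v)
     (v3add (v3add u (v3scale (al - be) a)) (v3neg (v3scale (dot3 a v) a)))
     (v3add v (cross3 a u)) (be + dot3 a v)"

lemma Tm_GG: "Tm a \<in> GG"
proof (rule GG_I[where h="Tm (v3neg a)"])
  fix x y :: "'a oct" and s :: 'a
  obtain a1 a2 a3 where a: "a = V3 a1 a2 a3" by (metis vec3.exhaust)
  obtain p u1 u2 u3 v1 v2 v3 q where x: "x = Oct p (V3 u1 u2 u3) (V3 v1 v2 v3) q" by (rule oct_cases)
  obtain p' u1' u2' u3' v1' v2' v3' q' where y: "y = Oct p' (V3 u1' u2' u3') (V3 v1' v2' v3') q'" by (rule oct_cases)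
  show "Tm a (oadd x y) = oadd (Tm a x) (Tm a y)" by (simp add: a x y algebra_simps)
  show "Tm a (oscale s x) = oscale s (Tm a x)" by (simp add: a x y algebra_simps)
  show "Tm a (omult x y) = omult (Tm a x) (Tm a y)" by (simp add: a x y algebra_simps)
  show "otr (Tm a x) = otr x" by (simp add: a x otr_def)
  show "Tm (v3neg a) (Tm a x) = x" by (simp add: a x algebra_simps)
  show "Tm a (Tm (v3neg a) x) = x" by (simp add: a x algebra_simps)
next
  show "Tm a one_O = one_O" by (cases a) (simp add: one_O_def zero3_def)
qed

fun Sw :: "'a::field oct \<Rightarrow> 'a oct" where
  "Sw (Oct al u v be) = Oct be (v3neg v) (v3neg u) al"

lemma Sw_GG: "Sw \<in> GG"
proof (rule GG_I[where h="Sw"])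
  fix x y :: "'a oct" and s :: 'a
  obtain p u1 u2 u3 v1 v2 v3 q where x: "x = Oct p (V3 u1 u2 u3) (V3 v1 v2 v3) q" by (rule oct_cases)
  obtain p' u1' u2' u3' v1' v2' v3' q' where y: "y = Oct p' (V3 u1' u2' u3') (V3 v1' v2' v3') q'" by (rule oct_cases)
  show "Sw (oadd x y) = oadd (Sw x) (Sw y)" by (simp add: x y algebra_simps)
  show "Sw (oscale s x) = oscale s (Sw x)" by (simp add: x y algebra_simps)
  show "Sw (omult x y) = omult (Sw x) (Sw y)" by (simp add: x y algebra_simps)
  show "otr (Sw x) = otr x" by (simp add: x otr_def)
  show "Sw (Sw x) = x" by (simp add: x algebra_simps)
  show "Sw (Sw x) = x" by (simp add: x algebra_simps)
next
  show "Sw one_O = one_O" by (simp add: one_O_def zero3_def)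
qed

fun mv :: "'a::field vec3 vec3 \<Rightarrow> 'a vec3 \<Rightarrow> 'a vec3" where
  "mv (V3 r1 r2 r3) u = V3 (dot3 r1 u) (dot3 r2 u) (dot3 r3 u)"

fun cofm :: "'a::field vec3 vec3 \<Rightarrow> 'a vec3 vec3" where
  "cofm (V3 r1 r2 r3) = V3 (cross3 r2 r3) (cross3 r3 r1) (cross3 r1 r2)"

fun trm :: "'a::field vec3 vec3 \<Rightarrow> 'a vec3 vec3" where
  "trm (V3 (V3 a b c) (V3 d e f) (V3 g h i)) = V3 (V3 a d g) (V3 b e h) (V3 c f i)"

fun detm :: "'a::field vec3 vec3 \<Rightarrow> 'a" where
  "detm (V3 r1 r2 r3) = dot3 r1 (cross3 r2 r3)"

fun Ps :: "'a::field vec3 vec3 \<Rightarrow> 'a oct \<Rightarrow> 'a oct" where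
  "Ps M (Oct al u v be) = Oct al (mv M u) (mv (cofm M) v) be"

lemma mat_cases: obtains a b c d e f g h i where "M = V3 (V3 a b c) (V3 d e f) (V3 g h i)"
  by (metis vec3.exhaust)

lemma Ps_GG: assumes "detm M = 1" shows "Ps M \<in> GG"
proof (rule GG_I[where h="Ps (trm (cofm M))"])
  fix x y :: "'a oct" and s :: 'a
  obtain m11 m12 m13 m21 m22 m23 m31 m32 m33 where M: "M = V3 (V3 m11 m12 m13) (V3 m21 m22 m23) (V3 m31 m32 m33)" by (rule mat_cases)
  obtain p u1 u2 u3 v1 v2 v3 q where x: "x = Oct p (V3 u1 u2 u3) (V3 v1 v2 v3) q" by (rule oct_cases)
  obtain p' u1' u2' u3' v1' v2' v3' q' where y: "y = Oct p' (V3 u1' u2' u3') (V3 v1' v2' v3') q'" by (rule oct_cases)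
  have d: "m11 * (m22 * m33 - m23 * m32) + m12 * (m23 * m31 - m21 * m33) + m13 * (m21 * m32 - m22 * m31) = 1"
    using assms by (simp add: M)
  show "Ps M (oadd x y) = oadd (Ps M x) (Ps M y)" by (simp add: M x y algebra_simps)
  show "Ps M (oscale s x) = oscale s (Ps M x)" by (simp add: M x y algebra_simps)
  show "Ps M (omult x y) = omult (Ps M x) (Ps M y)" 
    apply (simp add: M x y)
    using d by algebra
  show "otr (Ps M x) = otr x" by (simp add: M x otr_def)
  show "Ps (trm (cofm M)) (Ps M x) = x" apply (simp add: M x) using d by algebra
  show "Ps M (Ps (trm (cofm M)) x) = x" apply (simp add: M x) using d by algebra
next
  show "Ps M one_O = one_O" by (cases M rule: mat_cases) (simp add: one_O_def zero3_def)
qed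

lemma Mexists: assumes "u \<noteq> (zero3::'a::field vec3)"
  shows "\<exists>M. detm M = 1 \<and> mv M u = V3 1 0 0"
proof -
  obtain u1 u2 u3 where u: "u = V3 u1 u2 u3" by (metis vec3.exhaust)
  show ?thesis
  proof (cases "u1 = 0")
    case False
    show ?thesis
      by (rule exI[of _ "V3 (V3 (1/u1) 0 0) (V3 (-u2/u1) 1 0) (V3 (-u3) 0 u1)"])
         (use False in \<open>simp add: u field_simps\<close>)
  next
    case z1: True
    show ?thesis
    proof (cases "u2 = 0")
      case False
      show ?thesis
        by (rule exI[of _ "V3 (V3 0 (1/u2) 0) (V3 1 0 0) (V3 0 u3 (-u2))"])
           (use False z1 in \<open>simp add: u field_simps\<close>)
    next
      case z2: True
      then have "u3 \<noteq> 0" using z1 assms u by (auto simp: zero3_def)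
      then show ?thesis
        by (intro exI[of _ "V3 (V3 0 0 (1/u3)) (V3 u3 0 0) (V3 0 1 0)"])
           (use z1 z2 in \<open>simp add: u field_simps\<close>)
    qed
  qed
qed

lemma GG_inj: "g \<in> GG \<Longrightarrow> inj g"
  unfolding GG_def G2_def by (auto dest: bij_is_inj)

lemma L4: assumes "u \<noteq> zero3" "dot3 u v = 0"
  shows "\<exists>g\<in>GG. g (Oct 0 u v 0) = (uvec 1 :: 'a::field oct)"
proof -
  obtain M where M: "detm M = 1" "mv M u = V3 1 0 0" using Mexists[OF assms(1)] by blast
  obtain w1 w2 w3 where w: "mv (cofm M) v = V3 w1 w2 w3" by (metis vec3.exhaust)
  have "w1 = detm M * dot3 u v"
  proof -
    obtain m11 m12 m13 m21 m22 m23 m31 m32 m33 where MM: "M = V3 (V3 m11 m12 m13) (V3 m21 m22 m23) (V3 m31 m32 m33)" by (rule mat_cases)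
    obtain u1 u2 u3 where u: "u = V3 u1 u2 u3" by (metis vec3.exhaust)
    obtain v1 v2 v3 where v: "v = V3 v1 v2 v3" by (metis vec3.exhaust)
    show ?thesis using M(2) w by (simp add: MM u v) algebra
  qed
  then have w1: "w1 = 0" using assms M by simp
  have "Tm (V3 0 w3 (-w2)) (Ps M (Oct 0 u v 0)) = uvec 1"
    using M w w1 by (simp add: uvec_def oc_def zero3_def)
  moreover have "Tm (V3 0 w3 (-w2)) \<circ> Ps M \<in> GG" by (rule GG_comp[OF Ps_GG[OF M(1)] Tm_GG])
  ultimately show ?thesis by (metis comp_apply)
qed

lemma L3: assumes "Oct 0 u v 0 \<noteq> ozero" "dot3 u v = 0"
  shows "\<exists>g\<in>GG. g (Oct 0 u v 0) = (uvec 1 :: 'a::field oct)"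
proof (cases "u = zero3")
  case False then show ?thesis using L4 assms by blast
next
  case True
  then have v: "v \<noteq> zero3" using assms by (simp add: ozero_def)
  have nv: "v3neg v \<noteq> zero3" using v by (cases v) (auto simp: zero3_def)
  have "Sw (Oct 0 u v 0) = Oct 0 (v3neg v) zero3 0" using True by (simp add: zero3_def)
  moreover obtain g where g: "g \<in> GG" "g (Oct 0 (v3neg v) zero3 0) = uvec 1"
    using L4[OF nv, of zero3] by (cases v) (auto simp: zero3_def)
  ultimately show ?thesis using GG_comp[OF Sw_GG g(1)] by (metis comp_apply)
qed

lemma L2: assumes c2: "(2::'a::field) = 0" and "Oct al u v al \<noteq> ozero" "al * al + dot3 u v = 0"
  shows "\<exists>g\<in>GG. g (Oct al u v al) = (uvec 1 :: 'a oct)"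
proof (cases "al = 0")
  case True then show ?thesis using L3 assms by simp
next
  case False
  obtain v1 v2 v3 where v: "v = V3 v1 v2 v3" by (metis vec3.exhaust)
  obtain u1 u2 u3 where u: "u = V3 u1 u2 u3" by (metis vec3.exhaust)
  have "v \<noteq> zero3" using False assms(3) by (auto simp: zero3_def v u)
  have "\<exists>a. dot3 a v = al"
  proof (cases "v1 = 0")
    case False then show ?thesis by (intro exI[of _ "V3 (al/v1) 0 0"]) (simp add: v)
  next
    case z1: True show ?thesis
    proof (cases "v2 = 0")
      case False then show ?thesis by (intro exI[of _ "V3 0 (al/v2) 0"]) (simp add: v)
    next
      case True
      then have "v3 \<noteq> 0" using z1 \<open>v \<noteq> zero3\<close> by (simp add: v zero3_def)
      then show ?thesis by (intro exI[of _ "V3 0 0 (al/v3)"]) (simp add: v)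
    qed
  qed
  then obtain a where a: "dot3 a v = al" by blast
  obtain a1 a2 a3 where av: "a = V3 a1 a2 a3" by (metis vec3.exhaust)
  have key: "(u1 - al * a1) * (v1 + (a2 * u3 - a3 * u2)) +
        (u2 - al * a2) * (v2 + (a3 * u1 - a1 * u3)) +
        (u3 - al * a3) * (v3 + (a1 * u2 - a2 * u1)) = 0"
  proof -
    have "(u1 - al * a1) * (v1 + (a2 * u3 - a3 * u2)) +
          (u2 - al * a2) * (v2 + (a3 * u1 - a1 * u3)) +
          (u3 - al * a3) * (v3 + (a1 * u2 - a2 * u1)) = (u1 * v1 + u2 * v2 + u3 * v3) - al * (a1 * v1 + a2 * v2 + a3 * v3)"
      by (simp add: algebra_simps)
    also have "\<dots> = (al * al + (u1 * v1 + u2 * v2 + u3 * v3)) - 2 * (al * al)"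
      using a by (simp add: av v algebra_simps)
    also have "\<dots> = 0" using assms(3) c2 by (simp add: u v)
    finally show ?thesis .
  qed
  have e1: "al + al = 0" using c2 by (metis mult_2 mult_zero_left)
  define u' where "u' = v3add (v3add u (v3scale (al - al) a)) (v3neg (v3scale (dot3 a v) a))"
  define v' where "v' = v3add v (cross3 a u)"
  have T: "Tm a (Oct al u v al) = Oct 0 u' v' 0" using a e1 by (simp add: u'_def v'_def)
  have d: "dot3 u' v' = 0" using key a by (simp add: u'_def v'_def u v av)
  have "Oct 0 u' v' 0 \<noteq> ozero"
  proof
    assume "Oct 0 u' v' 0 = ozero"
    moreover have "Tm a ozero = ozero" by (simp add: av ozero_def zero3_def)
    ultimately have "Tm a (Oct al u v al) = Tm a ozero" using T by simp
    then show False using assms(2) GG_inj[OF Tm_GG] by (metis injD)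
  qed
  then obtain g where g: "g \<in> GG" "g (Oct 0 u' v' 0) = uvec 1" using L3 d by blast
  show ?thesis using GG_comp[OF Tm_GG g(1), of a] T g(2) by (metis comp_apply)
qed



lemma T3: assumes "q2 \<noteq> 0 \<or> q3 \<noteq> 0"
  shows "\<exists>g\<in>GG. g (uvec 1) = uvec 1 \<and> g (Oct 0 zero3 (V3 0 q2 q3) 0) = (vvec 2 :: 'a::field oct)"
proof -
  have "\<exists>a b c d. a * d - b * c = 1 \<and> d * q2 - c * q3 = 1 \<and> a * q3 - b * q2 = (0::'a)"
  proof (cases "q2 = 0")
    case False then show ?thesis
      by (intro exI[of _ q2] exI[of _ q3] exI[of _ 0] exI[of _ "1/q2"]) (simp add: field_simps)
  next
    case True then have "q3 \<noteq> 0" using assms by simp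
    then show ?thesis using True
      by (intro exI[of _ 0] exI[of _ q3] exI[of _ "-1/q3"] exI[of _ 0]) (simp add: field_simps)
  qed
  then obtain a b c d where abcd: "a * d - b * c = 1" "d * q2 - c * q3 = 1" "a * q3 - b * q2 = (0::'a)" by blast
  let ?M = "V3 (V3 1 0 0) (V3 0 a b) (V3 0 c d)"
  have "detm ?M = 1" using abcd by (simp add: algebra_simps)
  moreover have "Ps ?M (uvec 1) = uvec 1" by (simp add: uvec_def oc_def zero3_def)
  moreover have "Ps ?M (Oct 0 zero3 (V3 0 q2 q3) 0) = vvec 2"
    using abcd by (simp add: vvec_def oc_def zero3_def algebra_simps)
  ultimately show ?thesis using Ps_GG by blast
qed

lemma char2_neg: assumes "(2::'a::field) = 0" shows "- (x::'a) = x"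
proof -
  have "x + x = 0" using assms by (metis mult_2 mult_zero_left)
  then have "x = - x" by (simp only: eq_neg_iff_add_eq_0)
  then show ?thesis by simp
qed

lemma tr_eq: assumes "(2::'a::field) = 0" "otr (Oct al u v be) = (0::'a)" shows "be = al"
proof -
  have "be + al = 0" using assms(2) by (simp add: otr_def add.commute)
  then have "be = - al" by (simp only: add_eq_0_iff2)
  then show ?thesis using char2_neg[OF assms(1)] by simp
qed

lemma sq: assumes "(2::'a::field) = 0"
  shows "omult (Oct al u v al) (Oct al u v al) = oscale (al * al + dot3 u v) (one_O :: 'a oct)"
proof -
  have e: "\<And>x::'a. x + x = 0" using assms by (metis mult_2 mult_zero_left)
  obtain u1 u2 u3 where u: "u = V3 u1 u2 u3" by (metis vec3.exhaust)
  obtain v1 v2 v3 where v: "v = V3 v1 v2 v3" by (metis vec3.exhaust)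
  show ?thesis by (simp add: u v one_O_def zero3_def e mult.commute)
qed

lemma norm0: assumes c2: "(2::'a::field) = 0" and B: "subalgebra B" and "one_O \<notin> B"
  and z: "Oct al u v al \<in> B" shows "al * al + dot3 u v = (0::'a)"
proof (rule ccontr)
  assume n: "al * al + dot3 u v \<noteq> 0"
  have "omult (Oct al u v al) (Oct al u v al) \<in> B" using B z unfolding subalgebra_def by blast
  then have "oscale (1 / (al * al + dot3 u v)) (omult (Oct al u v al) (Oct al u v al)) \<in> B"
    using B unfolding subalgebra_def by blast
  moreover have "oscale (1 / (al * al + dot3 u v)) (omult (Oct al u v al) (Oct al u v al)) = one_O"
    unfolding sq[OF c2] using n by (simp add: one_O_def zero3_def)
  ultimately show False using assms(3) by simp
qed

lemma T2: assumes c2: "(2::'a::field) = 0" and B: "subalgebra B" and BO: "B \<subseteq> O0" and n1: "one_O \<notin> B"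
  and u1B: "uvec 1 \<in> B" and wB: "w \<in> B"
  and ind: "\<forall>s t. oadd (oscale s (uvec 1)) (oscale t w) = ozero \<longrightarrow> s = 0 \<and> t = (0::'a)"
  shows "\<exists>g\<in>GG. uvec 1 \<in> g ` B \<and> vvec 2 \<in> g ` B"
proof -
  have add: "\<And>x y. x \<in> B \<Longrightarrow> y \<in> B \<Longrightarrow> oadd x y \<in> B"
   and sc: "\<And>s x. x \<in> B \<Longrightarrow> oscale s x \<in> B"
   and mul: "\<And>x y. x \<in> B \<Longrightarrow> y \<in> B \<Longrightarrow> omult x y \<in> B" using B unfolding subalgebra_def by blast+
  obtain al be u1 u2 u3 v1 v2 v3 where w: "w = Oct al (V3 u1 u2 u3) (V3 v1 v2 v3) be"
    by (metis oct_cases)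
  have "otr w = 0" using BO wB by (auto simp: O0_def)
  then have "be = al" using tr_eq[OF c2] by (simp add: w)
  note w = w[unfolded this]
  have n: "al * al + (u1 * v1 + u2 * v2 + u3 * v3) = 0" using norm0[OF c2 B n1 wB[unfolded w]] by simp
  have "oadd (uvec 1) w \<in> B" using add u1B wB by blast
  then have "Oct al (V3 (1 + u1) u2 u3) (V3 v1 v2 v3) al \<in> B" by (simp add: w uvec_def oc_def zero3_def)
  from norm0[OF c2 B n1 this] have "al * al + ((u1 + 1) * v1 + u2 * v2 + u3 * v3) = 0"
    by (simp add: algebra_simps)
  moreover have "v1 = (al * al + ((u1 + 1) * v1 + u2 * v2 + u3 * v3)) - (al * al + (u1 * v1 + u2 * v2 + u3 * v3))"
    by (simp add: algebra_simps)
  ultimately have v1: "v1 = 0" using n by simp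
  have "\<exists>q2 q3. (q2 \<noteq> 0 \<or> q3 \<noteq> 0) \<and> Oct 0 zero3 (V3 0 q2 q3) 0 \<in> B"
  proof (cases "u2 \<noteq> 0 \<or> u3 \<noteq> 0")
    case True
    have "oadd (omult (uvec 1) w) (oscale (- al) (uvec 1)) \<in> B" using add sc mul u1B wB by blast
    moreover have "oadd (omult (uvec 1) w) (oscale (- al) (uvec 1)) = Oct 0 zero3 (V3 0 (-u3) u2) 0"
      using v1 by (simp add: w uvec_def oc_def zero3_def)
    ultimately have "Oct 0 zero3 (V3 0 (-u3) u2) 0 \<in> B" by simp
    moreover have "-u3 \<noteq> 0 \<or> u2 \<noteq> 0" using True by (cases "u3 = 0") simp_all
    ultimately show ?thesis by (intro exI[of _ "-u3"] exI[of _ u2] conjI)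
  next
    case False
    then have "al * al = 0" using n v1 by simp
    then have al: "al = 0" by simp
    have "oadd w (oscale (- u1) (uvec 1)) \<in> B" using add sc u1B wB by blast
    moreover have "oadd w (oscale (- u1) (uvec 1)) = Oct 0 zero3 (V3 0 v2 v3) 0"
      using v1 al False by (simp add: w uvec_def oc_def zero3_def)
    moreover have "v2 \<noteq> 0 \<or> v3 \<noteq> 0"
    proof (rule ccontr)
      assume "\<not> (v2 \<noteq> 0 \<or> v3 \<noteq> 0)"
      then have "oadd (oscale u1 (uvec 1)) (oscale (-1) w) = ozero"
        using v1 al False by (simp add: w uvec_def oc_def zero3_def ozero_def)
      then show False using ind[rule_format, of u1 "-1"] by simp
    qed
    ultimately show ?thesis by (intro exI[of _ v2] exI[of _ v3] conjI) simp_all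
  qed
  then obtain q2 q3 where q: "q2 \<noteq> 0 \<or> q3 \<noteq> 0" "Oct 0 zero3 (V3 0 q2 q3) 0 \<in> B" by blast
  obtain g where "g \<in> GG" "g (uvec 1) = uvec 1" "g (Oct 0 zero3 (V3 0 q2 q3) 0) = vvec 2"
    using T3[OF q(1)] by blast
  then have "uvec 1 \<in> g ` B" "vvec 2 \<in> g ` B" using q(2) u1B by (metis image_eqI)+
  then show ?thesis using \<open>g \<in> GG\<close> by blast
qed

lemma oscale0: "oscale 0 z = (ozero :: 'a::field oct)"
  by (cases z rule: oct_cases) (simp add: ozero_def zero3_def)

lemma GG_props: assumes "g \<in> GG"
  shows "\<And>x y. g (oadd x y) = oadd (g x) (g y)" "\<And>s x. g (oscale s x) = oscale s (g x)"
    "\<And>x y. g (omult x y) = omult (g x) (g y)" "\<And>x. otr (g x) = otr x" "g one_O = one_O"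
    "inj g" "g ozero = ozero" "g \<in> G2"
proof -
  show a: "\<And>x y. g (oadd x y) = oadd (g x) (g y)" "\<And>s x. g (oscale s x) = oscale s (g x)"
    "\<And>x y. g (omult x y) = omult (g x) (g y)" "\<And>x. otr (g x) = otr x" "g one_O = one_O" "g \<in> G2"
    using assms unfolding GG_def G2_def by auto
  show "inj g" using GG_inj[OF assms] .
  have "g (oscale 0 ozero) = oscale 0 (g ozero)" using a(2) .
  then show "g ozero = ozero" by (simp add: oscale0)
qed

lemma image_subalg: assumes "g \<in> GG" "subalgebra A" shows "subalgebra (g ` A)"
proof -
  note p = GG_props[OF assms(1)]
  have "ozero \<in> A" using assms(2) unfolding subalgebra_def by blast
  then have "ozero \<in> g ` A" using p(7) by (metis image_eqI)
  moreover have "\<forall>x\<in>g ` A. \<forall>y\<in>g ` A. oadd x y \<in> g ` A"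
    using assms(2) unfolding subalgebra_def by (auto simp: p(1)[symmetric])
  moreover have "\<forall>s. \<forall>x\<in>g ` A. oscale s x \<in> g ` A"
    using assms(2) unfolding subalgebra_def by (auto simp: p(2)[symmetric])
  moreover have "\<forall>x\<in>g ` A. \<forall>y\<in>g ` A. omult x y \<in> g ` A"
    using assms(2) unfolding subalgebra_def by (auto simp: p(3)[symmetric])
  ultimately show ?thesis unfolding subalgebra_def by blast
qed

theorem lemma6p8:
  fixes A :: "'a::alg_closed_field oct set"
  assumes "CHAR('a) = 2"
    and "subalgebra A"
    and "A \<subseteq> O0"
    and "dim_ge2 A"
  shows "\<exists>g\<in>G2. ({one_O, uvec 1} \<subseteq> g ` A) \<or>
                 ({uvec 1, vvec 2} \<subseteq> g ` A \<and> one_O \<notin> g ` A)"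
proof -
  have c2: "(2::'a) = 0" using of_nat_CHAR[where 'a='a] assms(1) by simp
  have add: "\<And>x y. x \<in> A \<Longrightarrow> y \<in> A \<Longrightarrow> oadd x y \<in> A"
   and sc: "\<And>s x. x \<in> A \<Longrightarrow> oscale s x \<in> A"
   and mul: "\<And>x y. x \<in> A \<Longrightarrow> y \<in> A \<Longrightarrow> omult x y \<in> A" using assms(2) unfolding subalgebra_def by blast+
  have trA: "\<And>z. z \<in> A \<Longrightarrow> \<exists>al u v. z = Oct al u v al"
  proof -
    fix z assume "z \<in> A"
    then have t: "otr z = 0" using assms(3) by (auto simp: O0_def)
    obtain al u v be where z: "z = Oct al u v be" by (metis oct.exhaust)
    have "be = al" using tr_eq[OF c2] t by (simp add: z)
    then show "\<exists>al u v. z = Oct al u v al" using z by blast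
  qed
  obtain x y where xy: "x \<in> A" "y \<in> A"
    and ind: "\<forall>s t. oadd (oscale s x) (oscale t y) = ozero \<longrightarrow> s = 0 \<and> t = 0"
    using assms(4) unfolding dim_ge2_def by blast
  have xnz: "x \<noteq> ozero"
  proof
    assume "x = ozero"
    then have "oadd (oscale 1 x) (oscale 0 y) = ozero"
      by (cases y rule: oct_cases) (simp add: ozero_def zero3_def)
    then show False using ind by (metis one_neq_zero)
  qed
  show ?thesis
  proof (cases "one_O \<in> A")
    case True
    have "\<exists>z\<in>A. \<forall>c. z \<noteq> oscale c one_O"
    proof (rule ccontr)
      assume "\<not> ?thesis"
      then obtain c d where c: "x = oscale c one_O" and d: "y = oscale d one_O" using xy by blast
      have "oadd (oscale d x) (oscale (-c) y) = ozero"
        by (simp add: c d one_O_def ozero_def zero3_def algebra_simps)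
      then have "d = 0 \<and> c = 0" using ind by (metis neg_equal_0_iff_equal)
      then have "x = ozero" using c by (simp add: one_O_def ozero_def zero3_def)
      then show False using xnz by simp
    qed
    then obtain z where zA: "z \<in> A" and zn: "\<And>c. z \<noteq> oscale c one_O" by blast
    obtain al u v where z: "z = Oct al u v al" using trA[OF zA] by blast
    obtain lam where lam: "lam ^ 2 = al * al + dot3 u v" using nth_root_exists[of 2] by auto
    let ?w = "oadd z (oscale lam one_O)"
    have wA: "?w \<in> A" using add sc zA True by blast
    have w: "?w = Oct (al + lam) u v (al + lam)"
      by (cases u, cases v) (simp add: z one_O_def zero3_def)
    have "(al + lam) * (al + lam) + dot3 u v = 2 * (al * al + dot3 u v + al * lam)"
      using lam by (simp add: algebra_simps power2_eq_square)
    then have n: "(al + lam) * (al + lam) + dot3 u v = 0" using c2 by simp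
    have wnz: "Oct (al + lam) u v (al + lam) \<noteq> ozero"
    proof
      assume h: "Oct (al + lam) u v (al + lam) = ozero"
      then have "u = zero3" "v = zero3" "al = - lam" by (auto simp: ozero_def add_eq_0_iff2)
      then have "z = oscale al one_O" by (simp add: z one_O_def zero3_def)
      then show False using zn by blast
    qed
    obtain g where g: "g \<in> GG" "g (Oct (al + lam) u v (al + lam)) = uvec 1"
      using L2[OF c2 wnz n] by blast
    have "one_O \<in> g ` A" using True GG_props(5)[OF g(1)] by (metis image_eqI)
    moreover have "uvec 1 \<in> g ` A" using wA w g(2) by (metis image_eqI)
    ultimately show ?thesis using GG_props(8)[OF g(1)] by blast
  next
    case False
    obtain al u v where x: "x = Oct al u v al" using trA[OF xy(1)] by blast
    have n: "al * al + dot3 u v = 0" using norm0[OF c2 assms(2) False xy(1)[unfolded x]] .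
    obtain g1 where g1: "g1 \<in> GG" "g1 x = uvec 1" using L2[OF c2 xnz[unfolded x] n] x by blast
    note p = GG_props[OF g1(1)]
    let ?B = "g1 ` A"
    have B: "subalgebra ?B" by (rule image_subalg[OF g1(1) assms(2)])
    have BO: "?B \<subseteq> O0" using assms(3) p(4) by (auto simp: O0_def)
    have n1: "one_O \<notin> ?B"
    proof
      assume "one_O \<in> ?B"
      then obtain a where "a \<in> A" "g1 a = one_O" by auto
      then have "g1 a = g1 one_O" using p(5) by simp
      then have "a = one_O" using p(6) by (simp add: inj_eq)
      then show False using False \<open>a \<in> A\<close> by simp
    qed
    have u1B: "uvec 1 \<in> ?B" using xy(1) g1(2) by (metis image_eqI)
    have wB: "g1 y \<in> ?B" using xy(2) by simp
    have indB: "\<forall>s t. oadd (oscale s (uvec 1)) (oscale t (g1 y)) = ozero \<longrightarrow> s = 0 \<and> t = 0"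
    proof (intro allI impI)
      fix s t assume h: "oadd (oscale s (uvec 1)) (oscale t (g1 y)) = ozero"
      have "g1 (oadd (oscale s x) (oscale t y)) = oadd (oscale s (uvec 1)) (oscale t (g1 y))"
        using g1(2) p(1,2) by simp
      then have "g1 (oadd (oscale s x) (oscale t y)) = g1 ozero" using h p(7) by simp
      then have "oadd (oscale s x) (oscale t y) = ozero" using p(6) by (simp add: inj_eq)
      then show "s = 0 \<and> t = 0" using ind by blast
    qed
    obtain g2 where g2: "g2 \<in> GG" "uvec 1 \<in> g2 ` ?B" "vvec 2 \<in> g2 ` ?B"
      using T2[OF c2 B BO n1 u1B wB indB] by blast
    note q = GG_props[OF g2(1)]
    have gg: "g2 \<circ> g1 \<in> GG" by (rule GG_comp[OF g1(1) g2(1)])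
    have im: "(g2 \<circ> g1) ` A = g2 ` ?B" by (simp add: image_comp)
    have "one_O \<notin> g2 ` ?B"
    proof
      assume "one_O \<in> g2 ` ?B"
      then obtain a where "a \<in> ?B" "g2 a = one_O" by (metis imageE)
      then have "g2 a = g2 one_O" using q(5) by simp
      then have "a = one_O" using q(6) by (simp add: inj_eq)
      then show False using n1 \<open>a \<in> ?B\<close> by simp
    qed
    then show ?thesis using g2(2,3) im GG_props(8)[OF gg] by (metis empty_subsetI insert_subset)
  qed
qed

end
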